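(* Let $\sigma : \mathcal{S} \to \mathcal{A}$ be a strong-receptive courteous pre-$\sim$-strategy on a thin concurrent game $\mathcal{A}$; then $\mathcal{S}$ is race-preserving as well.
   Context: $e \rightarrow e'$ denotes immediate causal dependency ($e<e'$ with nothing strictly between). An essp is an event structure with polarities $A$ with a symmetry $(\tilde A,l_A,r_A)$, equivalently an isomorphism family $\mathbb{S}_A$ of bijections between configurations. An essp $\mathcal{A}$ is race-preserving if $l_A$ preserves races: whenever a configuration of $\tilde A$ (an isomorphism $\theta\in\mathbb{S}_A$) extends by a negative event and by a positive event to configurations of $\tilde A$ whose union is not a configuration of $\tilde A$, then the images under $l_A$ are likewise incompatible in $A$. A thin concurrent game (tcg) is an essp which is race-preserving and has receptive thin sub-symmetries of $\mathcal{A}^\perp$ and $\mathcal{A}$. A pre-$\sim$-strategy is a map of essps; it is courteous if $s_1 \rightarrow s_2$ with $\mathrm{pol}(s_1)=+$ or $\mathrm{pol}(s_2)=-$ implies $\sigma s_1 \rightarrow \sigma s_2$, and strong-receptive if whenever $\theta\in\mathbb{S}_S$ and $\sigma\theta$ extends in $\mathbb{S}_A$ by a pair $(a_1,a_2)$ of negative events, there is a unique extension $\theta\cup\{(s_1,s_2)\}\in\mathbb{S}_S$ with $\sigma s_i=a_i$. *)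

theory Defs
  imports Main
begin

datatype polarity = Pos | Neg

fun dual_pol :: "polarity \<Rightarrow> polarity" where
  "dual_pol Pos = Neg" | "dual_pol Neg = Pos"

text \<open>An essp: events, causal order, binary conflict, polarity, and the
  isomorphism family (symmetry) given as a set of bijections between
  configurations, each represented by its graph.\<close>
record 'a essp =
  ev  :: "'a set"
  le  :: "'a \<Rightarrow> 'a \<Rightarrow> bool"
  cf  :: "'a \<Rightarrow> 'a \<Rightarrow> bool"
  pol :: "'a \<Rightarrow> polarity"
  sym :: "('a \<times> 'a) set set"

definition es :: "'a essp \<Rightarrow> bool" where
  "es G \<longleftrightarrow>
     (\<forall>e e'. le G e e' \<longrightarrow> e \<in> ev G \<and> e' \<in> ev G)
   \<and> (\<forall>e\<in>ev G. le G e e)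
   \<and> (\<forall>e e'. le G e e' \<and> le G e' e \<longrightarrow> e = e')
   \<and> (\<forall>e e' e''. le G e e' \<and> le G e' e'' \<longrightarrow> le G e e'')
   \<and> (\<forall>e\<in>ev G. finite {e'. le G e' e})
   \<and> (\<forall>e e'. cf G e e' \<longrightarrow> e \<in> ev G \<and> e' \<in> ev G)
   \<and> (\<forall>e e'. cf G e e' \<longrightarrow> cf G e' e)
   \<and> (\<forall>e. \<not> cf G e e)
   \<and> (\<forall>e e' e''. cf G e e' \<and> le G e' e'' \<longrightarrow> cf G e e'')"

definition config :: "'a essp \<Rightarrow> 'a set \<Rightarrow> bool" where
  "config G x \<longleftrightarrow> x \<subseteq> ev G \<and> finite x
     \<and> (\<forall>e\<in>x. \<forall>e'. le G e' e \<longrightarrow> e' \<in> x)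
     \<and> (\<forall>e\<in>x. \<forall>e'\<in>x. \<not> cf G e e')"

definition iso_fam :: "'a essp \<Rightarrow> ('a \<times> 'a) set set \<Rightarrow> bool" where
  "iso_fam G S \<longleftrightarrow>
     (\<forall>\<theta>\<in>S. single_valued \<theta> \<and> single_valued (\<theta>\<inverse>)
              \<and> config G (Domain \<theta>) \<and> config G (Range \<theta>))
   \<and> (\<forall>x. config G x \<longrightarrow> Id_on x \<in> S)
   \<and> (\<forall>\<theta>\<in>S. \<theta>\<inverse> \<in> S)
   \<and> (\<forall>\<theta>\<in>S. \<forall>\<phi>\<in>S. Range \<theta> = Domain \<phi> \<longrightarrow> \<theta> O \<phi> \<in> S)
   \<and> (\<forall>\<theta>\<in>S. \<forall>x'. config G x' \<and> x' \<subseteq> Domain \<theta> \<longrightarrow> {p\<in>\<theta>. fst p \<in> x'} \<in> S)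
   \<and> (\<forall>\<theta>\<in>S. \<forall>x'. config G x' \<and> Domain \<theta> \<subseteq> x' \<longrightarrow>
          (\<exists>\<theta>'\<in>S. \<theta> \<subseteq> \<theta>' \<and> Domain \<theta>' = x'))"

definition is_essp :: "'a essp \<Rightarrow> bool" where
  "is_essp G \<longleftrightarrow> es G \<and> iso_fam G (sym G)
     \<and> (\<forall>\<theta>\<in>sym G. \<forall>(a, b)\<in>\<theta>. pol G a = pol G b)"

text \<open>Race-preservation: configurations of the event structure of isomorphisms
  are exactly the elements of the symmetry; l projects an isomorphism to its domain.\<close>
definition race_preserving :: "'a essp \<Rightarrow> bool" where
  "race_preserving G \<longleftrightarrow>
     (\<forall>\<theta> a1 a2 b1 b2.
        \<theta> \<in> sym G
        \<and> (a1, a2) \<notin> \<theta> \<and> insert (a1, a2) \<theta> \<in> sym G \<and> pol G a1 = Neg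
        \<and> (b1, b2) \<notin> \<theta> \<and> insert (b1, b2) \<theta> \<in> sym G \<and> pol G b1 = Pos
        \<and> insert (a1, a2) (insert (b1, b2) \<theta>) \<notin> sym G
        \<longrightarrow> \<not> config G (insert a1 (insert b1 (Domain \<theta>))))"

definition imm :: "'a essp \<Rightarrow> 'a \<Rightarrow> 'a \<Rightarrow> bool" where
  "imm G e e' \<longleftrightarrow> le G e e' \<and> e \<noteq> e'
     \<and> \<not> (\<exists>e''. le G e e'' \<and> le G e'' e' \<and> e'' \<noteq> e \<and> e'' \<noteq> e')"

definition essp_map :: "'a essp \<Rightarrow> 'b essp \<Rightarrow> ('a \<Rightarrow> 'b) \<Rightarrow> bool" where
  "essp_map S A f \<longleftrightarrow>
     (\<forall>s\<in>ev S. f s \<in> ev A)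
   \<and> (\<forall>x. config S x \<longrightarrow> config A (f ` x) \<and> inj_on f x)
   \<and> (\<forall>s\<in>ev S. pol A (f s) = pol S s)
   \<and> (\<forall>\<theta>\<in>sym S. map_prod f f ` \<theta> \<in> sym A)"

definition pre_strategy :: "'a essp \<Rightarrow> 'b essp \<Rightarrow> ('a \<Rightarrow> 'b) \<Rightarrow> bool" where
  "pre_strategy S A \<sigma> \<longleftrightarrow> is_essp S \<and> is_essp A \<and> essp_map S A \<sigma>"

definition courteous :: "'a essp \<Rightarrow> 'b essp \<Rightarrow> ('a \<Rightarrow> 'b) \<Rightarrow> bool" where
  "courteous S A \<sigma> \<longleftrightarrow>
     (\<forall>s1 s2. imm S s1 s2 \<and> (pol S s1 = Pos \<or> pol S s2 = Neg) \<longrightarrow> imm A (\<sigma> s1) (\<sigma> s2))"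

definition strong_receptive :: "'a essp \<Rightarrow> 'b essp \<Rightarrow> ('a \<Rightarrow> 'b) \<Rightarrow> bool" where
  "strong_receptive S A \<sigma> \<longleftrightarrow>
     (\<forall>\<theta> a1 a2. \<theta> \<in> sym S
        \<and> (a1, a2) \<notin> map_prod \<sigma> \<sigma> ` \<theta>
        \<and> insert (a1, a2) (map_prod \<sigma> \<sigma> ` \<theta>) \<in> sym A
        \<and> pol A a1 = Neg \<and> pol A a2 = Neg
        \<longrightarrow> (\<exists>!p. insert p \<theta> \<in> sym S \<and> \<sigma> (fst p) = a1 \<and> \<sigma> (snd p) = a2))"

text \<open>Thin and receptive isomorphism families, relative to a polarity function
  (pol G for A, dual_pol \<circ> pol G for A^\<bottom>).\<close>
definition thin :: "'a essp \<Rightarrow> ('a \<Rightarrow> polarity) \<Rightarrow> ('a \<times> 'a) set set \<Rightarrow> bool" where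
  "thin G pl S \<longleftrightarrow>
     (\<forall>x a1 a2. config G x \<and> (a1, a2) \<notin> Id_on x \<and> insert (a1, a2) (Id_on x) \<in> S
        \<and> pl a1 = Pos \<longrightarrow> a1 = a2)"

definition receptive :: "'a essp \<Rightarrow> ('a \<Rightarrow> polarity) \<Rightarrow> ('a \<times> 'a) set set \<Rightarrow> bool" where
  "receptive G pl S \<longleftrightarrow>
     (\<forall>\<theta>\<in>S. \<forall>a1. a1 \<notin> Domain \<theta> \<and> config G (insert a1 (Domain \<theta>)) \<and> pl a1 = Neg
        \<longrightarrow> (\<exists>!a2. insert (a1, a2) \<theta> \<in> S))"

definition tcg :: "'a essp \<Rightarrow> bool" where
  "tcg A \<longleftrightarrow> is_essp A \<and> race_preserving A
     \<and> (\<exists>Sm Sp. iso_fam A Sm \<and> Sm \<subseteq> sym A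
           \<and> thin A (dual_pol \<circ> pol A) Sm \<and> receptive A (dual_pol \<circ> pol A) Sm
           \<and> iso_fam A Sp \<and> Sp \<subseteq> sym A
           \<and> thin A (pol A) Sp \<and> receptive A (pol A) Sp)"

end

theory Submission
  imports Defs
begin

lemma sv_notin_dom:
  assumes "(a,b) \<notin> \<theta>" "single_valued (insert (a,b) \<theta>)"
  shows "a \<notin> Domain \<theta>"
  using assms unfolding single_valued_def by blast

theorem mainTheorem9:
  fixes S :: "'a essp" and A :: "'b essp" and \<sigma> :: "'a \<Rightarrow> 'b"
  assumes "tcg A"
    and "pre_strategy S A \<sigma>"
    and "courteous S A \<sigma>"
    and "strong_receptive S A \<sigma>"
  shows "race_preserving S"
  unfolding race_preserving_def
proof (intro allI impI notI)
  fix \<theta> a1 a2 b1 b2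
  assume H: "\<theta> \<in> sym S \<and> (a1, a2) \<notin> \<theta> \<and> insert (a1, a2) \<theta> \<in> sym S \<and> pol S a1 = Neg
        \<and> (b1, b2) \<notin> \<theta> \<and> insert (b1, b2) \<theta> \<in> sym S \<and> pol S b1 = Pos
        \<and> insert (a1, a2) (insert (b1, b2) \<theta>) \<notin> sym S"
    and X: "config S (insert a1 (insert b1 (Domain \<theta>)))"
  define m where "m = map_prod \<sigma> \<sigma>"
  have eA: "is_essp A" and eS: "is_essp S" and mp: "essp_map S A \<sigma>"
    using assms(2) unfolding pre_strategy_def by auto
  have rpA: "race_preserving A" using assms(1) unfolding tcg_def by auto
  have isoS: "iso_fam S (sym S)" using eS unfolding is_essp_def by auto
  have polS: "\<forall>\<theta>\<in>sym S. \<forall>(a, b)\<in>\<theta>. pol S a = pol S b" using eS unfolding is_essp_def by auto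
  have mapsym: "\<And>t. t \<in> sym S \<Longrightarrow> m ` t \<in> sym A" using mp unfolding essp_map_def m_def by auto
  have mapcfg: "\<And>x. config S x \<Longrightarrow> config A (\<sigma> ` x) \<and> inj_on \<sigma> x"
    using mp unfolding essp_map_def by auto
  have mappol: "\<And>s. s \<in> ev S \<Longrightarrow> pol A (\<sigma> s) = pol S s"
    using mp unfolding essp_map_def by auto
  have isoprops: "\<And>t. t \<in> sym S \<Longrightarrow> single_valued t \<and> single_valued (t\<inverse>) \<and> config S (Domain t) \<and> config S (Range t)"
    using isoS unfolding iso_fam_def by auto
  have restr: "\<And>t x'. t \<in> sym S \<Longrightarrow> config S x' \<Longrightarrow> x' \<subseteq> Domain t \<Longrightarrow> {p\<in>t. fst p \<in> x'} \<in> sym S"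
    using isoS unfolding iso_fam_def by auto
  have th: "\<theta> \<in> sym S" and tha: "insert (a1,a2) \<theta> \<in> sym S" and thb: "insert (b1,b2) \<theta> \<in> sym S"
    and na: "(a1,a2) \<notin> \<theta>" and nb: "(b1,b2) \<notin> \<theta>" and pa: "pol S a1 = Neg" and pb: "pol S b1 = Pos"
    and nab: "insert (a1, a2) (insert (b1, b2) \<theta>) \<notin> sym S" using H by auto
  have a1D: "a1 \<notin> Domain \<theta>" using sv_notin_dom[OF na] isoprops[OF tha] by auto
  have b1D: "b1 \<notin> Domain \<theta>" using sv_notin_dom[OF nb] isoprops[OF thb] by auto
  have cDt: "config S (Domain \<theta>)" using isoprops[OF th] by auto
  have cDa: "config S (insert a1 (Domain \<theta>))" using isoprops[OF tha] by auto
  have cRa: "config S (insert a2 (Range \<theta>))" using isoprops[OF tha] by auto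
  have cRb: "config S (insert b2 (Range \<theta>))" using isoprops[OF thb] by auto
  have a1ev: "a1 \<in> ev S" and b1ev: "b1 \<in> ev S" using X unfolding config_def by auto
  have pA1: "pol A (\<sigma> a1) = Neg" using mappol[OF a1ev] pa by simp
  have pB1: "pol A (\<sigma> b1) = Pos" using mappol[OF b1ev] pb by simp
  have pa2: "pol S a2 = Neg" using polS tha pa by fastforce
  have a2ev: "a2 \<in> ev S" using cRa unfolding config_def by auto
  have pA2: "pol A (\<sigma> a2) = Neg" using mappol[OF a2ev] pa2 by simp
  have ma: "(\<sigma> a1, \<sigma> a2) \<notin> m ` \<theta>"
  proof
    assume "(\<sigma> a1, \<sigma> a2) \<in> m ` \<theta>"
    then obtain c d where cd: "(c,d) \<in> \<theta>" "\<sigma> c = \<sigma> a1" "\<sigma> d = \<sigma> a2" unfolding m_def by auto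
    have "c = a1" using mapcfg[OF cDa] cd by (auto simp: inj_on_def Domain.intros)
    moreover have "d = a2" using mapcfg[OF cRa] cd by (auto simp: inj_on_def Range.intros)
    ultimately show False using cd na by simp
  qed
  have cDb: "config S (insert b1 (Domain \<theta>))" using isoprops[OF thb] by auto
  have mb: "(\<sigma> b1, \<sigma> b2) \<notin> m ` \<theta>"
  proof
    assume "(\<sigma> b1, \<sigma> b2) \<in> m ` \<theta>"
    then obtain c d where cd: "(c,d) \<in> \<theta>" "\<sigma> c = \<sigma> b1" "\<sigma> d = \<sigma> b2" unfolding m_def by auto
    have "c = b1" using mapcfg[OF cDb] cd by (auto simp: inj_on_def Domain.intros)
    moreover have "d = b2" using mapcfg[OF cRb] cd by (auto simp: inj_on_def Range.intros)
    ultimately show False using cd nb by simp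
  qed
  have mtha: "insert (\<sigma> a1, \<sigma> a2) (m ` \<theta>) \<in> sym A" using mapsym[OF tha] by (simp add: m_def)
  have mthb: "insert (\<sigma> b1, \<sigma> b2) (m ` \<theta>) \<in> sym A" using mapsym[OF thb] by (simp add: m_def)
  have mth: "m ` \<theta> \<in> sym A" using mapsym[OF th] .
  have cX: "config A (insert (\<sigma> a1) (insert (\<sigma> b1) (Domain (m ` \<theta>))))"
  proof -
    have "Domain (m ` \<theta>) = \<sigma> ` Domain \<theta>" unfolding m_def by force
    then show ?thesis using mapcfg[OF X] by simp
  qed
  have phi: "insert (\<sigma> a1, \<sigma> a2) (insert (\<sigma> b1, \<sigma> b2) (m ` \<theta>)) \<in> sym A"
  proof (rule ccontr)
    assume nn: "insert (\<sigma> a1, \<sigma> a2) (insert (\<sigma> b1, \<sigma> b2) (m ` \<theta>)) \<notin> sym A"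
    have "\<not> config A (insert (\<sigma> a1) (insert (\<sigma> b1) (Domain (m ` \<theta>))))"
      by (rule rpA[unfolded race_preserving_def, rule_format]) (intro conjI; fact)
    then show False using cX by simp
  qed
  define \<theta>' where "\<theta>' = insert (b1,b2) \<theta>"
  have m\<theta>': "m ` \<theta>' = insert (\<sigma> b1, \<sigma> b2) (m ` \<theta>)" unfolding \<theta>'_def m_def by simp
  have ab_ne: "\<sigma> a1 \<noteq> \<sigma> b1" using pA1 pB1 by auto
  have ma': "(\<sigma> a1, \<sigma> a2) \<notin> m ` \<theta>'" using m\<theta>' ma ab_ne by auto
  have thb': "\<theta>' \<in> sym S" using thb unfolding \<theta>'_def .
  have phi': "insert (\<sigma> a1, \<sigma> a2) (m ` \<theta>') \<in> sym A" using phi m\<theta>' by simp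
  have "\<exists>!p. insert p \<theta>' \<in> sym S \<and> \<sigma> (fst p) = \<sigma> a1 \<and> \<sigma> (snd p) = \<sigma> a2"
    by (rule assms(4)[unfolded strong_receptive_def, rule_format, folded m_def]) (intro conjI; fact)
  then obtain p where p: "insert p \<theta>' \<in> sym S" "\<sigma> (fst p) = \<sigma> a1" "\<sigma> (snd p) = \<sigma> a2"
    by blast
  have uniq: "\<And>q. insert q \<theta> \<in> sym S \<Longrightarrow> \<sigma> (fst q) = \<sigma> a1 \<Longrightarrow> \<sigma> (snd q) = \<sigma> a2 \<Longrightarrow> q = (a1,a2)"
  proof -
    fix q assume q: "insert q \<theta> \<in> sym S" "\<sigma> (fst q) = \<sigma> a1" "\<sigma> (snd q) = \<sigma> a2"
    have "\<exists>!p. insert p \<theta> \<in> sym S \<and> \<sigma> (fst p) = \<sigma> a1 \<and> \<sigma> (snd p) = \<sigma> a2"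
      by (rule assms(4)[unfolded strong_receptive_def, rule_format, folded m_def]) (intro conjI; fact)
    then show "q = (a1,a2)" using q tha by (metis fst_conv snd_conv)
  qed
  obtain u v where puv: "p = (u,v)" by (cases p)
  have pn: "p \<notin> \<theta>'"
  proof
    assume "p \<in> \<theta>'"
    then have "m p \<in> m ` \<theta>'" by simp
    then show False using ma' p puv unfolding m_def by simp
  qed
  have uD: "u \<notin> Domain \<theta>'" using sv_notin_dom[of u v \<theta>'] pn puv isoprops[OF p(1)] by auto
  have cP: "config S (insert u (insert b1 (Domain \<theta>)))"
    using isoprops[OF p(1)] puv unfolding \<theta>'_def by simp
  have ub: "u \<noteq> b1" and uDt: "u \<notin> Domain \<theta>" using uD unfolding \<theta>'_def by auto
  have nle: "\<not> le S b1 u"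
  proof
    assume le: "le S b1 u"
    have imm: "imm S b1 u"
      unfolding imm_def
    proof (intro conjI notI)
      show "le S b1 u" by fact
      show "b1 = u \<Longrightarrow> False" using ub by simp
    next
      assume "\<exists>e''. le S b1 e'' \<and> le S e'' u \<and> e'' \<noteq> b1 \<and> e'' \<noteq> u"
      then obtain e where e: "le S b1 e" "le S e u" "e \<noteq> b1" "e \<noteq> u" by blast
      have "e \<in> insert u (insert b1 (Domain \<theta>))" using cP e(2) unfolding config_def by blast
      then have "e \<in> Domain \<theta>" using e by auto
      then have "b1 \<in> Domain \<theta>" using cDt e(1) unfolding config_def by blast
      then show False using b1D by simp
    qed
    have "imm A (\<sigma> b1) (\<sigma> u)" using assms(3) imm pb unfolding courteous_def by blast
    then have leA: "le A (\<sigma> b1) (\<sigma> a1)" using p(2) puv unfolding imm_def by simp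
    have cAa: "config A (\<sigma> ` insert a1 (Domain \<theta>))" using mapcfg[OF cDa] by simp
    have "\<sigma> b1 \<in> \<sigma> ` insert a1 (Domain \<theta>)"
      using cAa leA unfolding config_def by blast
    then obtain c where c: "c \<in> Domain \<theta>" "\<sigma> c = \<sigma> b1" using ab_ne by force
    have "c = b1" using mapcfg[OF X] c unfolding inj_on_def by blast
    then show False using c b1D by simp
  qed
  have cU: "config S (insert u (Domain \<theta>))"
    unfolding config_def
  proof (intro conjI ballI allI impI)
    show "insert u (Domain \<theta>) \<subseteq> ev S" "finite (insert u (Domain \<theta>))"
      using cP unfolding config_def by auto
  next
    fix e e' assume "e \<in> insert u (Domain \<theta>)" "le S e' e"
    from this(1) show "e' \<in> insert u (Domain \<theta>)"
    proof (rule insertE)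
      assume "e = u"
      then have "e' \<in> insert u (insert b1 (Domain \<theta>))" using cP \<open>le S e' e\<close> unfolding config_def by blast
      then show ?thesis using nle \<open>e = u\<close> \<open>le S e' e\<close> by auto
    next
      assume "e \<in> Domain \<theta>"
      then show ?thesis using cDt \<open>le S e' e\<close> unfolding config_def by blast
    qed
  next
    fix e e' assume "e \<in> insert u (Domain \<theta>)" "e' \<in> insert u (Domain \<theta>)"
    then show "\<not> cf S e e'" using cP unfolding config_def by blast
  qed
  have sub: "insert u (Domain \<theta>) \<subseteq> Domain (insert p \<theta>')" using puv unfolding \<theta>'_def by auto
  have eq: "{q\<in>insert p \<theta>'. fst q \<in> insert u (Domain \<theta>)} = insert p \<theta>"
    using puv ub b1D unfolding \<theta>'_def by auto
  have "insert p \<theta> \<in> sym S" using restr[OF p(1) cU sub] eq by simp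
  then have "p = (a1,a2)" using uniq p by blast
  then show False using p(1) nab unfolding \<theta>'_def by simp
qed

end
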